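(* Let $X$ and $Y$ be finite connected undirected graphs and $f:X\to Y$ a morphism which is a weak equivalence for the closed model on $\mathrm{UGph}$ defined by counting the family $(c^p_U)_{p\ge1}$, i.e. for every $p\ge1$ the map $\mathrm{Hom}_{\mathrm{UGph}}(c^p_U,X)\to\mathrm{Hom}_{\mathrm{UGph}}(c^p_U,Y)$, $h\mapsto f\circ h$, is bijective. Then $f$ is an isomorphism.
   Context: An undirected graph $X$ consists of a set of nodes $X(0)$, a set of half-arcs $X(1)$, maps $s,t:X(1)\to X(0)$ (source, target) and an involution $\iota$ of $X(1)$ with $s\circ\iota=t$ (fixed points of $\iota$ are allowed). A morphism $f:X\to Y$ is a pair $f_0:X(0)\to Y(0)$, $f_1:X(1)\to Y(1)$ with $f_0\circ s=s\circ f_1$, $f_0\circ t=t\circ f_1$, $f_1\circ\iota=\iota\circ f_1$; $\mathrm{UGph}$ is the resulting category. An arc is a pair $\{u,\iota(u)\}$; connectedness refers to the graph whose vertices are the nodes and whose edges join the source and target of each half-arc. For $p\ge1$, $c^p_U$ is the undirected graph with nodes $\mathbb{Z}/p\mathbb{Z}$ and half-arcs $[n]^+,[n]^-$ ($[n]\in\mathbb{Z}/p$), with $s([n]^+)=[n]$, $t([n]^+)=[n+1]$, $s([n]^-)=[n+1]$, $t([n]^-)=[n]$, $\iota([n]^+)=[n]^-$. *)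

theory Defs
  imports "HOL-Library.FuncSet"
begin

record ('v, 'a) ugraph =
  nodes :: "'v set"
  harcs :: "'a set"
  src   :: "'a \<Rightarrow> 'v"
  tgt   :: "'a \<Rightarrow> 'v"
  inv   :: "'a \<Rightarrow> 'a"

definition is_ugraph :: "('v, 'a) ugraph \<Rightarrow> bool" where
  "is_ugraph X \<longleftrightarrow>
     src X \<in> harcs X \<rightarrow> nodes X \<and>
     tgt X \<in> harcs X \<rightarrow> nodes X \<and>
     inv X \<in> harcs X \<rightarrow> harcs X \<and>
     (\<forall>u \<in> harcs X. inv X (inv X u) = u) \<and>
     (\<forall>u \<in> harcs X. src X (inv X u) = tgt X u)"

definition finite_ugraph :: "('v, 'a) ugraph \<Rightarrow> bool" where
  "finite_ugraph X \<longleftrightarrow> finite (nodes X) \<and> finite (harcs X)"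

definition adj_rel :: "('v, 'a) ugraph \<Rightarrow> ('v \<times> 'v) set" where
  "adj_rel X = {(src X u, tgt X u) | u. u \<in> harcs X}"

definition connected_ugraph :: "('v, 'a) ugraph \<Rightarrow> bool" where
  "connected_ugraph X \<longleftrightarrow> nodes X \<noteq> {} \<and>
     (\<forall>x \<in> nodes X. \<forall>y \<in> nodes X. (x, y) \<in> (adj_rel X \<union> (adj_rel X)\<inverse>)\<^sup>*)"

definition ugraph_mor ::
  "('v, 'a) ugraph \<Rightarrow> ('w, 'b) ugraph \<Rightarrow> ('v \<Rightarrow> 'w) \<Rightarrow> ('a \<Rightarrow> 'b) \<Rightarrow> bool" where
  "ugraph_mor X Y f0 f1 \<longleftrightarrow>
     f0 \<in> nodes X \<rightarrow> nodes Y \<and> f1 \<in> harcs X \<rightarrow> harcs Y \<and>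
     (\<forall>u \<in> harcs X. f0 (src X u) = src Y (f1 u)) \<and>
     (\<forall>u \<in> harcs X. f0 (tgt X u) = tgt Y (f1 u)) \<and>
     (\<forall>u \<in> harcs X. f1 (inv X u) = inv Y (f1 u))"

definition ugraph_iso ::
  "('v, 'a) ugraph \<Rightarrow> ('w, 'b) ugraph \<Rightarrow> ('v \<Rightarrow> 'w) \<Rightarrow> ('a \<Rightarrow> 'b) \<Rightarrow> bool" where
  "ugraph_iso X Y f0 f1 \<longleftrightarrow> ugraph_mor X Y f0 f1 \<and>
     (\<exists>g0 g1. ugraph_mor Y X g0 g1 \<and>
        (\<forall>x \<in> nodes X. g0 (f0 x) = x) \<and> (\<forall>u \<in> harcs X. g1 (f1 u) = u) \<and>
        (\<forall>y \<in> nodes Y. f0 (g0 y) = y) \<and> (\<forall>v \<in> harcs Y. f1 (g1 v) = v))"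

text \<open>The cycle graph c^p_U: nodes Z/pZ represented by {0..<p};
  half-arc [n]^+ is (n, True), [n]^- is (n, False).\<close>
definition cycU :: "nat \<Rightarrow> (nat, nat \<times> bool) ugraph" where
  "cycU p = \<lparr> nodes = {..<p},
              harcs = {..<p} \<times> UNIV,
              src = (\<lambda>(n, b). if b then n else (n + 1) mod p),
              tgt = (\<lambda>(n, b). if b then (n + 1) mod p else n),
              inv = (\<lambda>(n, b). (n, \<not> b)) \<rparr>"

text \<open>Hom(Z, X) as pairs of extensional maps (so that morphisms are identified
  by their values on carriers).\<close>
definition Hom ::
  "('u, 'c) ugraph \<Rightarrow> ('v, 'a) ugraph \<Rightarrow> (('u \<Rightarrow> 'v) \<times> ('c \<Rightarrow> 'a)) set" where
  "Hom Z X = {(h0, h1). ugraph_mor Z X h0 h1 \<and>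
                 h0 \<in> extensional (nodes Z) \<and> h1 \<in> extensional (harcs Z)}"

definition post_comp ::
  "('u, 'c) ugraph \<Rightarrow> ('v \<Rightarrow> 'w) \<Rightarrow> ('a \<Rightarrow> 'b)
     \<Rightarrow> ('u \<Rightarrow> 'v) \<times> ('c \<Rightarrow> 'a) \<Rightarrow> ('u \<Rightarrow> 'w) \<times> ('c \<Rightarrow> 'b)" where
  "post_comp Z f0 f1 h = (restrict (f0 \<circ> fst h) (nodes Z), restrict (f1 \<circ> snd h) (harcs Z))"

definition cyc_weak_equiv ::
  "('v, 'a) ugraph \<Rightarrow> ('w, 'b) ugraph \<Rightarrow> ('v \<Rightarrow> 'w) \<Rightarrow> ('a \<Rightarrow> 'b) \<Rightarrow> bool" where
  "cyc_weak_equiv X Y f0 f1 \<longleftrightarrow>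
     (\<forall>p \<ge> 1. bij_betw (post_comp (cycU p) f0 f1) (Hom (cycU p) X) (Hom (cycU p) Y))"

end

theory Submission
  imports Defs
begin

definition walkhom :: "('v,'a) ugraph \<Rightarrow> nat \<Rightarrow> (nat \<Rightarrow> 'a) \<Rightarrow> (nat \<Rightarrow> 'v) \<times> (nat \<times> bool \<Rightarrow> 'a)" where
  "walkhom X p w = (restrict (\<lambda>n. src X (w n)) {..<p},
      restrict (\<lambda>(n,b). if b then w n else inv X (w n)) ({..<p} \<times> UNIV))"

lemma cycU_simps[simp]:
  "nodes (cycU p) = {..<p}" "harcs (cycU p) = {..<p} \<times> UNIV"
  "src (cycU p) = (\<lambda>(n, b). if b then n else (n + 1) mod p)"
  "tgt (cycU p) = (\<lambda>(n, b). if b then (n + 1) mod p else n)"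
  "inv (cycU p) = (\<lambda>(n, b). (n, \<not> b))"
  by (simp_all add: cycU_def)

lemma walk_Hom:
  assumes X: "is_ugraph X" and p: "p \<ge> 1"
    and w: "\<And>n. n < p \<Longrightarrow> w n \<in> harcs X"
    and c: "\<And>n. n < p \<Longrightarrow> tgt X (w n) = src X (w (Suc n mod p))"
  shows "walkhom X p w \<in> Hom (cycU p) X"
proof -
  have ii: "\<And>u. u \<in> harcs X \<Longrightarrow> inv X (inv X u) = u" using X by (simp add: is_ugraph_def)
  have si: "\<And>u. u \<in> harcs X \<Longrightarrow> src X (inv X u) = tgt X u" using X by (simp add: is_ugraph_def)
  have ti: "\<And>u. u \<in> harcs X \<Longrightarrow> tgt X (inv X u) = src X u"
    using X unfolding is_ugraph_def by (metis PiE)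
  have iX: "\<And>u. u \<in> harcs X \<Longrightarrow> inv X u \<in> harcs X" using X unfolding is_ugraph_def by blast
  have sX: "\<And>u. u \<in> harcs X \<Longrightarrow> src X u \<in> nodes X" using X unfolding is_ugraph_def by blast
  have md: "\<And>n. Suc n mod p < p" using p by simp
  show ?thesis
    unfolding Hom_def walkhom_def ugraph_mor_def
    using w c ii si ti iX sX md
    by (auto simp: Pi_def)
qed

lemma post_walk:
  assumes f: "ugraph_mor X Y f0 f1"
    and w: "\<And>n. n < p \<Longrightarrow> w n \<in> harcs X"
  shows "post_comp (cycU p) f0 f1 (walkhom X p w) = walkhom Y p (f1 \<circ> w)"
  using f w unfolding post_comp_def walkhom_def ugraph_mor_def
  by (auto intro!: ext simp: restrict_def)

lemma walkhom_eq:
  assumes "walkhom X p w = walkhom X p w'" "n < p"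
  shows "w n = w' n"
proof -
  have "snd (walkhom X p w) (n, True) = snd (walkhom X p w') (n, True)" using assms by simp
  thus ?thesis using assms(2) by (simp add: walkhom_def)
qed

lemma walkhom_snd: "n < p \<Longrightarrow> snd (walkhom X p w) (n, True) = w n"
  by (simp add: walkhom_def)

lemma lt2: "(n::nat) < 2 \<Longrightarrow> n = 0 \<or> n = 1" by auto
lemma lt4: "(n::nat) < 4 \<Longrightarrow> n = 0 \<or> n = 1 \<or> n = 2 \<or> n = 3" by auto

lemma conn_arc:
  assumes "connected_ugraph X" "is_ugraph X" "x \<in> nodes X" "x' \<in> nodes X" "x \<noteq> x'"
  shows "\<exists>u \<in> harcs X. src X u = x"
proof -
  have "(x, x') \<in> (adj_rel X \<union> (adj_rel X)\<inverse>)\<^sup>*" using assms unfolding connected_ugraph_def by blast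
  then obtain z where "(x, z) \<in> adj_rel X \<union> (adj_rel X)\<inverse>"
    using assms(5) by (metis converse_rtranclE)
  then show ?thesis
  proof
    assume "(x, z) \<in> adj_rel X" thus ?thesis unfolding adj_rel_def by auto
  next
    assume "(x, z) \<in> (adj_rel X)\<inverse>"
    then obtain u where u: "u \<in> harcs X" "tgt X u = x" unfolding adj_rel_def by auto
    hence "inv X u \<in> harcs X" "src X (inv X u) = x" using assms(2) unfolding is_ugraph_def by auto
    thus ?thesis by blast
  qed
qed

theorem proposition4p8:
  fixes X :: "('v, 'a) ugraph" and Y :: "('w, 'b) ugraph"
    and f0 :: "'v \<Rightarrow> 'w" and f1 :: "'a \<Rightarrow> 'b"
  assumes "is_ugraph X" and "is_ugraph Y"
    and "finite_ugraph X" and "finite_ugraph Y"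
    and "connected_ugraph X" and "connected_ugraph Y"
    and "ugraph_mor X Y f0 f1"
    and "cyc_weak_equiv X Y f0 f1"
  shows "ugraph_iso X Y f0 f1"
proof -
  note X = assms(1) and Y = assms(2) and f = assms(7)
  have bij: "\<And>p. p \<ge> 1 \<Longrightarrow> bij_betw (post_comp (cycU p) f0 f1) (Hom (cycU p) X) (Hom (cycU p) Y)"
    using assms(8) unfolding cyc_weak_equiv_def by blast
  have iX: "\<And>u. u \<in> harcs X \<Longrightarrow> inv X u \<in> harcs X" using X unfolding is_ugraph_def by blast
  have iY: "\<And>u. u \<in> harcs Y \<Longrightarrow> inv Y u \<in> harcs Y" using Y unfolding is_ugraph_def by blast
  have iiX: "\<And>u. u \<in> harcs X \<Longrightarrow> inv X (inv X u) = u" using X by (simp add: is_ugraph_def)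
  have iiY: "\<And>u. u \<in> harcs Y \<Longrightarrow> inv Y (inv Y u) = u" using Y by (simp add: is_ugraph_def)
  have siX: "\<And>u. u \<in> harcs X \<Longrightarrow> src X (inv X u) = tgt X u" using X by (simp add: is_ugraph_def)
  have siY: "\<And>u. u \<in> harcs Y \<Longrightarrow> src Y (inv Y u) = tgt Y u" using Y by (simp add: is_ugraph_def)
  have tiX: "\<And>u. u \<in> harcs X \<Longrightarrow> tgt X (inv X u) = src X u" using iX iiX siX by metis
  have tiY: "\<And>u. u \<in> harcs Y \<Longrightarrow> tgt Y (inv Y u) = src Y u" using iY iiY siY by metis
  have f1X: "\<And>u. u \<in> harcs X \<Longrightarrow> f1 u \<in> harcs Y" using f unfolding ugraph_mor_def by blast
  have f0X: "\<And>x. x \<in> nodes X \<Longrightarrow> f0 x \<in> nodes Y" using f unfolding ugraph_mor_def by blast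
  have fs: "\<And>u. u \<in> harcs X \<Longrightarrow> f0 (src X u) = src Y (f1 u)" using f unfolding ugraph_mor_def by blast
  have ft: "\<And>u. u \<in> harcs X \<Longrightarrow> f0 (tgt X u) = tgt Y (f1 u)" using f unfolding ugraph_mor_def by blast
  have fi: "\<And>u. u \<in> harcs X \<Longrightarrow> f1 (inv X u) = inv Y (f1 u)" using f unfolding ugraph_mor_def by blast
  have sX: "\<And>u. u \<in> harcs X \<Longrightarrow> src X u \<in> nodes X" using X unfolding is_ugraph_def by blast
  have sY: "\<And>u. u \<in> harcs Y \<Longrightarrow> src Y u \<in> nodes Y" using Y unfolding is_ugraph_def by blast
  have tX: "\<And>u. u \<in> harcs X \<Longrightarrow> tgt X u \<in> nodes X" using X unfolding is_ugraph_def by blast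
  have tY: "\<And>u. u \<in> harcs Y \<Longrightarrow> tgt Y u \<in> nodes Y" using Y unfolding is_ugraph_def by blast
  define w2X where "w2X = (\<lambda>u (n::nat). if n = 0 then u else inv X u)"
  define w2Y where "w2Y = (\<lambda>u (n::nat). if n = 0 then u else inv Y u)"
  have w2X: "\<And>u. u \<in> harcs X \<Longrightarrow> walkhom X 2 (w2X u) \<in> Hom (cycU 2) X"
    by (rule walk_Hom[OF X]) (auto simp: w2X_def iX siX tiX dest!: lt2)
  have w2Y: "\<And>u. u \<in> harcs Y \<Longrightarrow> walkhom Y 2 (w2Y u) \<in> Hom (cycU 2) Y"
    by (rule walk_Hom[OF Y]) (auto simp: w2Y_def iY siY tiY dest!: lt2)
  have pw2: "\<And>u. u \<in> harcs X \<Longrightarrow> post_comp (cycU 2) f0 f1 (walkhom X 2 (w2X u)) = walkhom Y 2 (w2Y (f1 u))"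
  proof -
    fix u assume u: "u \<in> harcs X"
    have "post_comp (cycU 2) f0 f1 (walkhom X 2 (w2X u)) = walkhom Y 2 (f1 \<circ> w2X u)"
      by (rule post_walk[OF f]) (auto simp: w2X_def u iX)
    also have "f1 \<circ> w2X u = w2Y (f1 u)" by (auto simp: w2X_def w2Y_def fi u)
    finally show "post_comp (cycU 2) f0 f1 (walkhom X 2 (w2X u)) = walkhom Y 2 (w2Y (f1 u))" .
  qed
  have inj1: "inj_on f1 (harcs X)"
  proof (rule inj_onI)
    fix u u' assume u: "u \<in> harcs X" and u': "u' \<in> harcs X" and e: "f1 u = f1 u'"
    have "inj_on (post_comp (cycU 2) f0 f1) (Hom (cycU 2) X)" using bij[of 2] by (simp add: bij_betw_def)
    moreover have "post_comp (cycU 2) f0 f1 (walkhom X 2 (w2X u)) = post_comp (cycU 2) f0 f1 (walkhom X 2 (w2X u'))"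
      using pw2 u u' e by simp
    ultimately have "walkhom X 2 (w2X u) = walkhom X 2 (w2X u')" using w2X u u' by (meson inj_onD)
    from walkhom_eq[OF this, of 0] show "u = u'" by (simp add: w2X_def)
  qed
  have surj1: "f1 ` harcs X = harcs Y"
  proof
    show "f1 ` harcs X \<subseteq> harcs Y" using f1X by blast
  next
    show "harcs Y \<subseteq> f1 ` harcs X"
    proof
      fix v assume v: "v \<in> harcs Y"
      have "walkhom Y 2 (w2Y v) \<in> post_comp (cycU 2) f0 f1 ` Hom (cycU 2) X"
        using bij[of 2] w2Y[OF v] by (simp add: bij_betw_def)
      then obtain h where h: "h \<in> Hom (cycU 2) X" and e: "post_comp (cycU 2) f0 f1 h = walkhom Y 2 (w2Y v)" by (metis imageE)
      have hm: "ugraph_mor (cycU 2) X (fst h) (snd h)" using h unfolding Hom_def by auto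
      have "snd h (0, True) \<in> harcs X" using hm unfolding ugraph_mor_def by auto
      moreover have "f1 (snd h (0, True)) = v"
      proof -
        have "snd (post_comp (cycU 2) f0 f1 h) (0, True) = snd (walkhom Y 2 (w2Y v)) (0, True)" using e by simp
        thus ?thesis by (simp add: post_comp_def walkhom_def w2Y_def)
      qed
      ultimately show "v \<in> f1 ` harcs X" by blast
    qed
  qed
  have surj0: "f0 ` nodes X = nodes Y"
  proof
    show "f0 ` nodes X \<subseteq> nodes Y" using f0X by blast
  next
    show "nodes Y \<subseteq> f0 ` nodes X"
    proof
      fix y assume y: "y \<in> nodes Y"
      obtain x0 where x0: "x0 \<in> nodes X" using assms(5) unfolding connected_ugraph_def by blast
      show "y \<in> f0 ` nodes X"
      proof (cases "y = f0 x0")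
        case True thus ?thesis using x0 by blast
      next
        case False
        then obtain v where v: "v \<in> harcs Y" "src Y v = y"
          using conn_arc[OF assms(6) Y y f0X[OF x0]] by blast
        then obtain u where u: "u \<in> harcs X" "f1 u = v" using surj1 by (metis imageE)
        hence "y = f0 (src X u)" using fs[OF u(1)] v by simp
        thus ?thesis using sX[OF u(1)] by blast
      qed
    qed
  qed
  have inj0: "inj_on f0 (nodes X)"
  proof (rule inj_onI, rule ccontr)
    fix x x' assume x: "x \<in> nodes X" and x': "x' \<in> nodes X" and e: "f0 x = f0 x'" and ne: "x \<noteq> x'"
    obtain u where u: "u \<in> harcs X" "src X u = x" using conn_arc[OF assms(5) X x x' ne] by blast
    obtain u' where u': "u' \<in> harcs X" "src X u' = x'" using conn_arc[OF assms(5) X x' x] ne by metis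
    define a where "a = f1 u"
    define b where "b = f1 u'"
    have a: "a \<in> harcs Y" and b: "b \<in> harcs Y" using f1X u u' by (auto simp: a_def b_def)
    have ab: "src Y a = src Y b" using fs[OF u(1)] fs[OF u'(1)] u u' e by (simp add: a_def b_def)
    define w where "w = (\<lambda>n::nat. if n = 0 then a else if n = 1 then inv Y a else if n = 2 then b else inv Y b)"
    have wY: "walkhom Y 4 w \<in> Hom (cycU 4) Y"
    proof (rule walk_Hom[OF Y])
      fix n :: nat assume "n < 4"
      then consider "n = 0" | "n = 1" | "n = 2" | "n = 3" by linarith
      note cs = this
      show "w n \<in> harcs Y" using cs by cases (simp_all add: w_def a b iY)
      show "tgt Y (w n) = src Y (w (Suc n mod 4))"
        using cs by cases (simp_all add: w_def a b siY tiY ab)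
    qed simp
    have "walkhom Y 4 w \<in> post_comp (cycU 4) f0 f1 ` Hom (cycU 4) X"
      using bij[of 4] wY by (simp add: bij_betw_def)
    then obtain h where h: "h \<in> Hom (cycU 4) X" and eh: "post_comp (cycU 4) f0 f1 h = walkhom Y 4 w" by (metis imageE)
    have hm: "ugraph_mor (cycU 4) X (fst h) (snd h)" using h unfolding Hom_def by auto
    have hv: "\<And>n. n < 4 \<Longrightarrow> f1 (snd h (n, True)) = w n"
    proof -
      fix n :: nat assume n: "n < 4"
      have "snd (post_comp (cycU 4) f0 f1 h) (n, True) = snd (walkhom Y 4 w) (n, True)" using eh by simp
      thus "f1 (snd h (n, True)) = w n" using n by (simp add: post_comp_def walkhom_def)
    qed
    have hX: "\<And>n. n < 4 \<Longrightarrow> snd h (n, True) \<in> harcs X" using hm unfolding ugraph_mor_def by auto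
    have "f1 (snd h (1, True)) = f1 (inv X u)" using hv[of 1] fi[OF u(1)] by (simp add: w_def a_def)
    hence h1: "snd h (1, True) = inv X u" using inj_onD[OF inj1 _ hX[of 1] iX[OF u(1)]] by simp
    have "f1 (snd h (2, True)) = f1 u'" using hv[of 2] by (simp add: w_def b_def)
    hence h2: "snd h (2, True) = u'" using inj_onD[OF inj1 _ hX[of 2] u'(1)] by simp
    have hs: "\<forall>z \<in> harcs (cycU 4). fst h (src (cycU 4) z) = src X (snd h z)"
      and ht: "\<forall>z \<in> harcs (cycU 4). fst h (tgt (cycU 4) z) = tgt X (snd h z)"
      using hm unfolding ugraph_mor_def by blast+
    have "fst h (src (cycU 4) (2, True)) = src X (snd h (2, True))"
      using hs by (simp del: cycU_simps(3,4))
    hence s2: "fst h 2 = x'" using h2 u' by simp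
    have "fst h (tgt (cycU 4) (1, True)) = tgt X (snd h (1, True))"
      using ht by (simp del: cycU_simps(3,4))
    hence "fst h 2 = x" using h1 tiX[OF u(1)] u by (simp add: numeral_2_eq_2)
    thus False using s2 ne by simp
  qed
  define g0 where "g0 = inv_into (nodes X) f0"
  define g1 where "g1 = inv_into (harcs X) f1"
  have g0X: "\<And>y. y \<in> nodes Y \<Longrightarrow> g0 y \<in> nodes X" and f0g0: "\<And>y. y \<in> nodes Y \<Longrightarrow> f0 (g0 y) = y"
    using surj0 by (auto simp: g0_def inv_into_into f_inv_into_f)
  have g1X: "\<And>y. y \<in> harcs Y \<Longrightarrow> g1 y \<in> harcs X" and f1g1: "\<And>y. y \<in> harcs Y \<Longrightarrow> f1 (g1 y) = y"
    using surj1 by (auto simp: g1_def inv_into_into f_inv_into_f)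
  have g0f0: "\<And>x. x \<in> nodes X \<Longrightarrow> g0 (f0 x) = x" using inj0 by (simp add: g0_def)
  have g1f1: "\<And>x. x \<in> harcs X \<Longrightarrow> g1 (f1 x) = x" using inj1 by (simp add: g1_def)
  have gm: "ugraph_mor Y X g0 g1"
    unfolding ugraph_mor_def
  proof (intro conjI ballI)
    show "g0 \<in> nodes Y \<rightarrow> nodes X" using g0X by blast
    show "g1 \<in> harcs Y \<rightarrow> harcs X" using g1X by blast
  next
    fix v assume v: "v \<in> harcs Y"
    show "g0 (src Y v) = src X (g1 v)"
      using fs[OF g1X[OF v]] f1g1[OF v] g0f0[OF sX[OF g1X[OF v]]] by simp
    show "g0 (tgt Y v) = tgt X (g1 v)"
      using ft[OF g1X[OF v]] f1g1[OF v] g0f0[OF tX[OF g1X[OF v]]] by simp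
    show "g1 (inv Y v) = inv X (g1 v)"
      using fi[OF g1X[OF v]] f1g1[OF v] g1f1[OF iX[OF g1X[OF v]]] by simp
  qed
  have "\<exists>g0 g1. ugraph_mor Y X g0 g1 \<and>
        (\<forall>x \<in> nodes X. g0 (f0 x) = x) \<and> (\<forall>u \<in> harcs X. g1 (f1 u) = u) \<and>
        (\<forall>y \<in> nodes Y. f0 (g0 y) = y) \<and> (\<forall>v \<in> harcs Y. f1 (g1 v) = v)"
    apply (rule exI[of _ g0], rule exI[of _ g1])
    using gm g0f0 g1f1 f0g0 f1g1 by simp
  thus ?thesis unfolding ugraph_iso_def using f by simp
qed

end
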